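(* Any quantum oracle algorithm that solves $\mathsf{EL\text{-}LCS\text{-}RLE}$ with probability at least $2/3$ requires $\tilde\Omega(n)$ queries, where $n$ is the encoded length of the inputs.
   Context: A string $\tilde s$ has run-length encoding (RLE) $s=s[1]\cdots s[m]$, its sequence of maximal runs of identical characters, each run having character $C(s[i])$ and length $R(s[i])$; $|s|=m$ is the encoded length. The problem $\mathsf{EL\text{-}LCS\text{-}RLE}$: given quantum oracle access to two RLE strings $A$ and $B$ only through the unitaries $|i\rangle|c\rangle|r\rangle\mapsto|i\rangle|c\oplus C(S[i])\rangle|r\oplus R(S[i])\rangle$ for $S\in\{A,B\}$ (no prefix-sum oracle), compute $|s|$ for an RLE string $s$ such that $\tilde s$ is a longest common substring of $\tilde A$ and $\tilde B$. $\tilde\Omega(\cdot)$ hides polylogarithmic factors. *)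

theory Defs
  imports Complex_Main "HOL-Library.Sublist"
begin

text \<open>An RLE string is a list of runs (C(s[i]), R(s[i])), characters and run lengths
  being natural numbers. Valid w.r.t. a register width W: every run length is positive,
  characters and run lengths are below 2^W (so that they fit in the query operator's W-bit
  registers), and adjacent runs have different characters (runs are maximal).\<close>

type_synonym rle = "(nat \<times> nat) list"

definition valid_rle :: "nat \<Rightarrow> rle \<Rightarrow> bool" where
  "valid_rle W S \<longleftrightarrow>
     (\<forall>(c, r) \<in> set S. c < 2 ^ W \<and> 0 < r \<and> r < 2 ^ W) \<and>
     (\<forall>i. Suc i < length S \<longrightarrow> fst (S ! i) \<noteq> fst (S ! Suc i))"

definition decode :: "rle \<Rightarrow> nat list" where
  "decode S = concat (map (\<lambda>(c, r). replicate r c) S)"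

definition enc_length :: "nat list \<Rightarrow> nat" where
  "enc_length w = length (remdups_adj w)"

definition is_LCSubstr :: "nat list \<Rightarrow> nat list \<Rightarrow> nat list \<Rightarrow> bool" where
  "is_LCSubstr x y w \<longleftrightarrow> sublist w x \<and> sublist w y \<and>
     (\<forall>v. sublist v x \<and> sublist v y \<longrightarrow> length v \<le> length w)"

definition el_lcs_answers :: "rle \<Rightarrow> rle \<Rightarrow> nat set" where
  "el_lcs_answers A B = {enc_length w | w. is_LCSubstr (decode A) (decode B) w}"

text \<open>Hilbert space: computational basis |i,c,r,w> with index register i < n,
  character register c < 2^W, run-length register r < 2^W and workspace w < K. States are functions
  nat => complex (only indices below the dimension matter), matrices are
  nat => nat => complex.\<close>

definition qdim :: "nat \<Rightarrow> nat \<Rightarrow> nat \<Rightarrow> nat" where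
  "qdim n W K = n * 2 ^ W * 2 ^ W * K"

definition enc_basis :: "nat \<Rightarrow> nat \<Rightarrow> nat \<Rightarrow> nat \<Rightarrow> nat \<Rightarrow> nat \<Rightarrow> nat" where
  "enc_basis n W i c r w = i + n * (c + 2 ^ W * (r + 2 ^ W * w))"

definition reg_i :: "nat \<Rightarrow> nat \<Rightarrow> nat \<Rightarrow> nat" where "reg_i n W j = j mod n"
definition reg_c :: "nat \<Rightarrow> nat \<Rightarrow> nat \<Rightarrow> nat" where "reg_c n W j = (j div n) mod 2 ^ W"
definition reg_r :: "nat \<Rightarrow> nat \<Rightarrow> nat \<Rightarrow> nat" where
  "reg_r n W j = (j div (n * 2 ^ W)) mod 2 ^ W"
definition reg_w :: "nat \<Rightarrow> nat \<Rightarrow> nat \<Rightarrow> nat" where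
  "reg_w n W j = j div (n * 2 ^ W * 2 ^ W)"

type_synonym qstate = "nat \<Rightarrow> complex"
type_synonym qmat = "nat \<Rightarrow> nat \<Rightarrow> complex"

definition mat_apply :: "nat \<Rightarrow> qmat \<Rightarrow> qstate \<Rightarrow> qstate" where
  "mat_apply D U \<psi> = (\<lambda>i. if i < D then (\<Sum>j<D. U i j * \<psi> j) else 0)"

definition unitary :: "nat \<Rightarrow> qmat \<Rightarrow> bool" where
  "unitary D U \<longleftrightarrow>
     (\<forall>i<D. \<forall>j<D. (\<Sum>k<D. cnj (U k i) * U k j) = (if i = j then 1 else 0))"

text \<open>The query operator (oracle unitary) of an RLE string S (of encoded length n):
  |i>|c>|r>|w>  |->  |i>|c XOR C(S[i])>|r XOR R(S[i])>|w>  (0-based i).\<close>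
definition query_op :: "nat \<Rightarrow> nat \<Rightarrow> nat \<Rightarrow> rle \<Rightarrow> qmat" where
  "query_op n W K S = (\<lambda>j' j.
     if j' < qdim n W K \<and> j < qdim n W K \<and>
        j' = enc_basis n W (reg_i n W j)
               (Bit_Operations.xor (reg_c n W j) (fst (S ! reg_i n W j)))
               (Bit_Operations.xor (reg_r n W j) (snd (S ! reg_i n W j)))
               (reg_w n W j)
     then 1 else 0)"

text \<open>A T-query algorithm: workspace dimension K, unitaries U_0, ..., U_T, for each
  query t = 1..T a choice which string is queried (True = A, False = B), and a classical
  output function applied to the outcome of a final computational-basis measurement.\<close>
record qalg =
  alg_ws :: nat
  alg_T :: nat
  alg_U :: "nat \<Rightarrow> qmat"
  alg_choice :: "nat \<Rightarrow> bool"
  alg_out :: "nat \<Rightarrow> nat"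

definition wf_qalg :: "nat \<Rightarrow> nat \<Rightarrow> qalg \<Rightarrow> bool" where
  "wf_qalg n W Q \<longleftrightarrow> 1 \<le> alg_ws Q \<and>
     (\<forall>t \<le> alg_T Q. unitary (qdim n W (alg_ws Q)) (alg_U Q t))"

fun run_state :: "nat \<Rightarrow> nat \<Rightarrow> qalg \<Rightarrow> rle \<Rightarrow> rle \<Rightarrow> nat \<Rightarrow> qstate" where
  "run_state n W Q A B 0 =
     mat_apply (qdim n W (alg_ws Q)) (alg_U Q 0) (\<lambda>j. if j = 0 then 1 else 0)"
| "run_state n W Q A B (Suc t) =
     (let D = qdim n W (alg_ws Q) in
      mat_apply D (alg_U Q (Suc t))
        (mat_apply D (query_op n W (alg_ws Q) (if alg_choice Q (Suc t) then A else B))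
          (run_state n W Q A B t)))"

definition success_prob :: "nat \<Rightarrow> nat \<Rightarrow> qalg \<Rightarrow> rle \<Rightarrow> rle \<Rightarrow> real" where
  "success_prob n W Q A B =
     (\<Sum>j < qdim n W (alg_ws Q).
        if alg_out Q j \<in> el_lcs_answers A B
        then (cmod (run_state n W Q A B (alg_T Q) j))\<^sup>2 else 0)"

definition solves_EL_LCS_RLE :: "nat \<Rightarrow> nat \<Rightarrow> qalg \<Rightarrow> bool" where
  "solves_EL_LCS_RLE n W Q \<longleftrightarrow> wf_qalg n W Q \<and>
     (\<forall>A B. length A = n \<and> length B = n \<and> valid_rle W A \<and> valid_rle W B \<longrightarrow>
        success_prob n W Q A B \<ge> 2 / 3)"

end

theory Submission
  imports Defs
begin

definition ip :: "nat \<Rightarrow> qstate \<Rightarrow> qstate \<Rightarrow> complex" where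
  "ip D \<phi> \<psi> = (\<Sum>j<D. cnj (\<phi> j) * \<psi> j)"

lemma unitary_ip:
  assumes U: "unitary D U"
  shows "ip D (mat_apply D U \<phi>) (mat_apply D U \<psi>) = ip D \<phi> \<psi>"
proof -
  have "ip D (mat_apply D U \<phi>) (mat_apply D U \<psi>) =
        (\<Sum>i<D. cnj (\<Sum>k<D. U i k * \<phi> k) * (\<Sum>l<D. U i l * \<psi> l))"
    by (simp add: ip_def mat_apply_def)
  also have "\<dots> = (\<Sum>i<D. \<Sum>k<D. \<Sum>l<D. (cnj (\<phi> k) * \<psi> l) * (cnj (U i k) * U i l))"
    by (simp add: sum_distrib_left sum_distrib_right mult_ac)
  also have "\<dots> = (\<Sum>k<D. \<Sum>l<D. \<Sum>i<D. (cnj (\<phi> k) * \<psi> l) * (cnj (U i k) * U i l))"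
    by (subst sum.swap, rule sum.cong[OF refl], rule sum.swap)
  also have "\<dots> = (\<Sum>k<D. \<Sum>l<D. (cnj (\<phi> k) * \<psi> l) * (if k = l then 1 else 0))"
    using U by (simp add: unitary_def sum_distrib_left[symmetric])
  also have "\<dots> = ip D \<phi> \<psi>"
    by (simp add: ip_def if_distrib cong: if_cong)
  finally show ?thesis .
qed

lemma xor_lt: "(a::nat) < 2 ^ W \<Longrightarrow> b < 2 ^ W \<Longrightarrow> Bit_Operations.xor a b < 2 ^ W"
  by (metis take_bit_nat_eq_self_iff take_bit_xor)

lemma reg_enc:
  assumes "i < n" "c < 2 ^ W" "r < 2 ^ W"
  shows "reg_i n W (enc_basis n W i c r w) = i"
    "reg_c n W (enc_basis n W i c r w) = c"
    "reg_r n W (enc_basis n W i c r w) = r"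
    "reg_w n W (enc_basis n W i c r w) = w"
proof -
  have n: "0 < n" using assms by simp
  let ?e = "enc_basis n W i c r w"
  have d1: "?e div n = c + 2 ^ W * (r + 2 ^ W * w)"
    using assms by (simp add: enc_basis_def)
  have d2: "?e div (n * 2 ^ W) = r + 2 ^ W * w"
    using assms by (simp add: div_mult2_eq d1)
  have d3: "?e div (n * 2 ^ W * 2 ^ W) = w"
    using assms by (simp add: div_mult2_eq[of ?e "n * 2 ^ W"] d2)
  show "reg_i n W ?e = i" using assms by (simp add: reg_i_def enc_basis_def)
  show "reg_c n W ?e = c" using assms by (simp add: reg_c_def d1)
  show "reg_r n W ?e = r" using assms by (simp add: reg_r_def d2)
  show "reg_w n W ?e = w" by (simp add: reg_w_def d3)
qed

lemma enc_reg:
  assumes "0 < n"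
  shows "enc_basis n W (reg_i n W j) (reg_c n W j) (reg_r n W j) (reg_w n W j) = j"
proof -
  have a: "j div (n * 2 ^ W) = j div n div 2 ^ W" by (simp add: div_mult2_eq)
  have b: "j div (n * 2 ^ W * 2 ^ W) = j div n div 2 ^ W div 2 ^ W" by (simp add: div_mult2_eq)
  have "j div n div 2 ^ W = j div n div 2 ^ W mod 2 ^ W + 2 ^ W * (j div n div 2 ^ W div 2 ^ W)"
    by simp
  hence "j div n = j div n mod 2 ^ W + 2 ^ W * (j div n div 2 ^ W mod 2 ^ W + 2 ^ W * (j div n div 2 ^ W div 2 ^ W))"
    by (metis mod_mult_div_eq add.commute mult.commute)
  hence "j = j mod n + n * (j div n mod 2 ^ W + 2 ^ W * (j div n div 2 ^ W mod 2 ^ W + 2 ^ W * (j div n div 2 ^ W div 2 ^ W)))"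
    by (metis mod_mult_div_eq add.commute mult.commute)
  thus ?thesis by (simp add: enc_basis_def reg_i_def reg_c_def reg_r_def reg_w_def a b)
qed

lemma enc_lt:
  assumes "i < n" "c < 2 ^ W" "r < 2 ^ W" "w < K"
  shows "enc_basis n W i c r w < qdim n W K"
proof -
  have "r + 2 ^ W * w < 2 ^ W * K"
  proof -
    have "r + 2 ^ W * w < 2 ^ W + 2 ^ W * w" using assms by simp
    also have "\<dots> = 2 ^ W * (w + 1)" by simp
    also have "\<dots> \<le> 2 ^ W * K" using assms by (intro mult_le_mono2) simp
    finally show ?thesis .
  qed
  hence "c + 2 ^ W * (r + 2 ^ W * w) < 2 ^ W * (2 ^ W * K)"
  proof -
    assume h: "r + 2 ^ W * w < 2 ^ W * K"
    have "c + 2 ^ W * (r + 2 ^ W * w) < 2 ^ W + 2 ^ W * (r + 2 ^ W * w)" using assms by simp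
    also have "\<dots> = 2 ^ W * (r + 2 ^ W * w + 1)" by simp
    also have "\<dots> \<le> 2 ^ W * (2 ^ W * K)" using h by (intro mult_le_mono2) simp
    finally show ?thesis .
  qed
  hence "i + n * (c + 2 ^ W * (r + 2 ^ W * w)) < n * (2 ^ W * (2 ^ W * K))"
  proof -
    assume h: "c + 2 ^ W * (r + 2 ^ W * w) < 2 ^ W * (2 ^ W * K)"
    have "i + n * (c + 2 ^ W * (r + 2 ^ W * w)) < n + n * (c + 2 ^ W * (r + 2 ^ W * w))" using assms by simp
    also have "\<dots> = n * (c + 2 ^ W * (r + 2 ^ W * w) + 1)" by simp
    also have "\<dots> \<le> n * (2 ^ W * (2 ^ W * K))" using h by (intro mult_le_mono2) simp
    finally show ?thesis .
  qed
  thus ?thesis by (simp add: enc_basis_def qdim_def mult_ac)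
qed

lemma reg_bounds:
  assumes "0 < n"
  shows "reg_i n W j < n" "reg_c n W j < 2 ^ W" "reg_r n W j < 2 ^ W"
    and "j < qdim n W K \<Longrightarrow> reg_w n W j < K"
  using assms by (auto simp: reg_i_def reg_c_def reg_r_def reg_w_def qdim_def less_mult_imp_div_less mult_ac)

definition okS :: "nat \<Rightarrow> nat \<Rightarrow> rle \<Rightarrow> bool" where
  "okS n W S \<longleftrightarrow> length S = n \<and> (\<forall>i<n. fst (S ! i) < 2 ^ W \<and> snd (S ! i) < 2 ^ W)"

definition sig :: "nat \<Rightarrow> nat \<Rightarrow> rle \<Rightarrow> nat \<Rightarrow> nat" where
  "sig n W S j = enc_basis n W (reg_i n W j)
               (Bit_Operations.xor (reg_c n W j) (fst (S ! reg_i n W j)))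
               (Bit_Operations.xor (reg_r n W j) (snd (S ! reg_i n W j)))
               (reg_w n W j)"

lemma sig_props:
  assumes "0 < n" "okS n W S"
  shows "reg_i n W (sig n W S j) = reg_i n W j"
    "j < qdim n W K \<Longrightarrow> sig n W S j < qdim n W K"
    "sig n W S (sig n W S j) = j"
proof -
  have i: "reg_i n W j < n" using reg_bounds assms by auto
  hence S: "fst (S ! reg_i n W j) < 2 ^ W" "snd (S ! reg_i n W j) < 2 ^ W" using assms by (auto simp: okS_def)
  have x: "Bit_Operations.xor (reg_c n W j) (fst (S ! reg_i n W j)) < 2 ^ W"
     "Bit_Operations.xor (reg_r n W j) (snd (S ! reg_i n W j)) < 2 ^ W"
    using S reg_bounds[OF assms(1)] xor_lt by auto
  show r: "reg_i n W (sig n W S j) = reg_i n W j" unfolding sig_def using reg_enc[OF i x] by simp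
  show "j < qdim n W K \<Longrightarrow> sig n W S j < qdim n W K"
    unfolding sig_def using enc_lt[OF i x] reg_bounds[OF assms(1)] by auto
  show "sig n W S (sig n W S j) = j"
    unfolding sig_def using reg_enc[OF i x] enc_reg[OF assms(1)]
    by (simp add: xor.assoc)
qed

lemma query_apply:
  assumes "0 < n" "okS n W S"
  shows "mat_apply (qdim n W K) (query_op n W K S) \<phi> j =
     (if j < qdim n W K then \<phi> (sig n W S j) else 0)"
proof (cases "j < qdim n W K")
  case True
  let ?D = "qdim n W K"
  have "(\<Sum>j0<?D. query_op n W K S j j0 * \<phi> j0) = (\<Sum>j0<?D. if j0 = sig n W S j then \<phi> j0 else 0)"
  proof (rule sum.cong[OF refl])
    fix j0 assume j0: "j0 \<in> {..<?D}"
    have "j = sig n W S j0 \<longleftrightarrow> j0 = sig n W S j"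
      using sig_props(3)[OF assms] by metis
    thus "query_op n W K S j j0 * \<phi> j0 = (if j0 = sig n W S j then \<phi> j0 else 0)"
      using True j0 by (simp add: query_op_def sig_def[symmetric])
  qed
  also have "\<dots> = \<phi> (sig n W S j)" using sig_props(2)[OF assms True] by simp
  finally show ?thesis using True by (simp add: mat_apply_def)
qed (simp add: mat_apply_def)

definition nrm :: "nat \<Rightarrow> qstate \<Rightarrow> real" where
  "nrm D \<phi> = (\<Sum>j<D. (cmod (\<phi> j))\<^sup>2)"

definition blk :: "nat \<Rightarrow> nat \<Rightarrow> nat \<Rightarrow> nat \<Rightarrow> qstate \<Rightarrow> real" where
  "blk n W D i \<phi> = (\<Sum>j<D. if reg_i n W j = i then (cmod (\<phi> j))\<^sup>2 else 0)"

lemma ip_self: "ip D \<phi> \<phi> = complex_of_real (nrm D \<phi>)"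
  unfolding ip_def nrm_def of_real_sum of_real_power
proof (rule sum.cong[OF refl])
  fix x show "cnj (\<phi> x) * \<phi> x = (complex_of_real (cmod (\<phi> x)))\<^sup>2"
    using complex_norm_square[of "\<phi> x"] by (simp add: mult.commute)
qed

lemma unitary_nrm: "unitary D U \<Longrightarrow> nrm D (mat_apply D U \<phi>) = nrm D \<phi>"
  using unitary_ip[of D U \<phi> \<phi>] by (simp add: ip_self)

lemma sum_sig:
  assumes "0 < n" "okS n W S"
  shows "(\<Sum>j<qdim n W K. g (sig n W S j)) = (\<Sum>j<qdim n W K. g j)"
  by (rule sum.reindex_bij_witness[where i="sig n W S" and j="sig n W S"])
     (use sig_props[OF assms] in auto)

lemma query_nrm:
  assumes "0 < n" "okS n W S"
  shows "nrm (qdim n W K) (mat_apply (qdim n W K) (query_op n W K S) \<phi>) = nrm (qdim n W K) \<phi>"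
  unfolding nrm_def using sum_sig[OF assms, of "\<lambda>j. (cmod (\<phi> j))\<^sup>2" K]
  by (simp add: query_apply[OF assms])

lemma blk_sum_le:
  assumes "finite I"
  shows "(\<Sum>i\<in>I. blk n W D i \<phi>) \<le> nrm D \<phi>"
proof -
  have "(\<Sum>i\<in>I. blk n W D i \<phi>) = (\<Sum>j<D. \<Sum>i\<in>I. if reg_i n W j = i then (cmod (\<phi> j))\<^sup>2 else 0)"
    unfolding blk_def by (rule sum.swap)
  also have "\<dots> = (\<Sum>j<D. if reg_i n W j \<in> I then (cmod (\<phi> j))\<^sup>2 else 0)"
    using assms by (simp add: sum.delta)
  also have "\<dots> \<le> nrm D \<phi>" unfolding nrm_def by (rule sum_mono) simp
  finally show ?thesis .
qed

lemma amgm: "cmod a * cmod b \<le> ((cmod a)\<^sup>2 + (cmod b)\<^sup>2) / 2"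
proof -
  have "0 \<le> (cmod a - cmod b)\<^sup>2" by simp
  thus ?thesis by (simp add: power2_diff field_simps)
qed

lemma query_delta:
  fixes K :: nat
  assumes n: "0 < n" and S: "okS n W S" and S': "okS n W S'"
    and agree: "\<And>m. m < n \<Longrightarrow> m \<noteq> i0 \<Longrightarrow> S ! m = S' ! m"
  defines "D \<equiv> qdim n W K"
  shows "cmod (ip D (mat_apply D (query_op n W K S) \<phi>) (mat_apply D (query_op n W K S') \<psi>) - ip D \<phi> \<psi>)
         \<le> blk n W D i0 \<phi> + blk n W D i0 \<psi>"
proof -
  let ?s = "sig n W S" and ?s' = "sig n W S'"
  have e1: "ip D (mat_apply D (query_op n W K S) \<phi>) (mat_apply D (query_op n W K S') \<psi>)
      = (\<Sum>j<D. cnj (\<phi> (?s j)) * \<psi> (?s' j))"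
    unfolding ip_def D_def by (simp add: query_apply[OF n S] query_apply[OF n S'])
  have e2: "ip D \<phi> \<psi> = (\<Sum>j<D. cnj (\<phi> (?s j)) * \<psi> (?s j))"
    unfolding ip_def D_def using sum_sig[OF n S, of "\<lambda>j. cnj (\<phi> j) * \<psi> j" K] by simp
  have same: "?s j = ?s' j" if "reg_i n W j \<noteq> i0" for j
  proof -
    have "reg_i n W j < n" using reg_bounds[OF n] by auto
    thus ?thesis using agree that by (simp add: sig_def)
  qed
  have "ip D (mat_apply D (query_op n W K S) \<phi>) (mat_apply D (query_op n W K S') \<psi>) - ip D \<phi> \<psi>
     = (\<Sum>j<D. if reg_i n W j = i0 then cnj (\<phi> (?s j)) * \<psi> (?s' j) - cnj (\<phi> (?s j)) * \<psi> (?s j) else 0)"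
    unfolding e1 e2 sum_subtractf[symmetric] by (rule sum.cong) (auto simp: same)
  hence "cmod (ip D (mat_apply D (query_op n W K S) \<phi>) (mat_apply D (query_op n W K S') \<psi>) - ip D \<phi> \<psi>)
     \<le> (\<Sum>j<D. cmod (if reg_i n W j = i0 then cnj (\<phi> (?s j)) * \<psi> (?s' j) - cnj (\<phi> (?s j)) * \<psi> (?s j) else 0))"
    by (simp add: norm_sum)
  also have "\<dots> \<le> (\<Sum>j<D. (if reg_i n W j = i0 then (cmod (\<phi> (?s j)))\<^sup>2 else 0)
        + ((if reg_i n W (?s' j) = i0 then (cmod (\<psi> (?s' j)))\<^sup>2 else 0)
         + (if reg_i n W (?s j) = i0 then (cmod (\<psi> (?s j)))\<^sup>2 else 0)) / 2)"
  proof (rule sum_mono)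
    fix j
    have r: "reg_i n W (?s j) = reg_i n W j" "reg_i n W (?s' j) = reg_i n W j"
      using sig_props(1)[OF n S] sig_props(1)[OF n S'] by auto
    have t: "cmod (cnj a * b - cnj a * c) \<le> (cmod a)\<^sup>2 + ((cmod b)\<^sup>2 + (cmod c)\<^sup>2) / 2" for a b c :: complex
    proof -
      have "cmod (cnj a * b - cnj a * c) \<le> cmod (cnj a * b) + cmod (cnj a * c)" by (rule norm_triangle_ineq4)
      also have "\<dots> = cmod a * cmod b + cmod a * cmod c" by (simp add: norm_mult)
      also have "\<dots> \<le> ((cmod a)\<^sup>2 + (cmod b)\<^sup>2) / 2 + ((cmod a)\<^sup>2 + (cmod c)\<^sup>2) / 2"
        using amgm[of a b] amgm[of a c] by linarith
      finally show ?thesis by (simp add: field_simps)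
    qed
    show "cmod (if reg_i n W j = i0 then cnj (\<phi> (?s j)) * \<psi> (?s' j) - cnj (\<phi> (?s j)) * \<psi> (?s j) else 0)
      \<le> (if reg_i n W j = i0 then (cmod (\<phi> (?s j)))\<^sup>2 else 0)
        + ((if reg_i n W (?s' j) = i0 then (cmod (\<psi> (?s' j)))\<^sup>2 else 0)
         + (if reg_i n W (?s j) = i0 then (cmod (\<psi> (?s j)))\<^sup>2 else 0)) / 2"
      using t r by simp
  qed
  also have "\<dots> = blk n W D i0 \<phi> + (blk n W D i0 \<psi> + blk n W D i0 \<psi>) / 2"
  proof -
    have a: "(\<Sum>j<D. (if reg_i n W j = i0 then (cmod (\<phi> (?s j)))\<^sup>2 else 0)) = blk n W D i0 \<phi>"
      using sum_sig[OF n S, of "\<lambda>j. if reg_i n W j = i0 then (cmod (\<phi> j))\<^sup>2 else 0" K]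
        sig_props(1)[OF n S]
      by (simp add: blk_def D_def)
    have b: "(\<Sum>j<D. (if reg_i n W (?s j) = i0 then (cmod (\<psi> (?s j)))\<^sup>2 else 0)) = blk n W D i0 \<psi>"
      using sum_sig[OF n S, of "\<lambda>j. if reg_i n W j = i0 then (cmod (\<psi> j))\<^sup>2 else 0" K]
      by (simp add: blk_def D_def)
    have c: "(\<Sum>j<D. (if reg_i n W (?s' j) = i0 then (cmod (\<psi> (?s' j)))\<^sup>2 else 0)) = blk n W D i0 \<psi>"
      using sum_sig[OF n S', of "\<lambda>j. if reg_i n W j = i0 then (cmod (\<psi> j))\<^sup>2 else 0" K]
      by (simp add: blk_def D_def)
    show ?thesis
      by (simp add: sum.distrib add_divide_distrib sum_divide_distrib[symmetric] a b c)
  qed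
  finally show ?thesis by simp
qed

lemma final_bound:
  fixes a b :: qstate
  assumes na: "nrm D a = 1" and nb: "nrm D b = 1"
    and pa: "(\<Sum>j<D. if j \<in> G then (cmod (a j))\<^sup>2 else 0) \<ge> 2/3"
    and pb: "(\<Sum>j<D. if j \<notin> G then (cmod (b j))\<^sup>2 else 0) \<ge> 2/3"
  shows "cmod (ip D a b) \<le> 17/18"
proof -
  let ?x = "\<lambda>j. (cmod (a j))\<^sup>2" and ?y = "\<lambda>j. (cmod (b j))\<^sup>2"
  have "cmod (ip D a b) \<le> (\<Sum>j<D. cmod (cnj (a j) * b j))"
    unfolding ip_def by (rule norm_sum)
  also have "\<dots> \<le> (\<Sum>j<D. 3/4 * ?x j + 3/4 * ?y j - 5/12 * (if j \<in> G then ?x j else 0)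
        - 5/12 * (if j \<notin> G then ?y j else 0))"
  proof (rule sum_mono)
    fix j
    have e: "cmod (cnj (a j) * b j) = cmod (a j) * cmod (b j)" by (simp add: norm_mult)
    have q1: "0 \<le> (cmod (a j) - 3/2 * cmod (b j))\<^sup>2" by simp
    have q2: "0 \<le> (cmod (b j) - 3/2 * cmod (a j))\<^sup>2" by simp
    show "cmod (cnj (a j) * b j) \<le> 3/4 * ?x j + 3/4 * ?y j - 5/12 * (if j \<in> G then ?x j else 0)
        - 5/12 * (if j \<notin> G then ?y j else 0)"
      unfolding e using q1 q2 by (cases "j \<in> G") (simp_all add: power2_diff power2_eq_square algebra_simps)
  qed
  also have "\<dots> = 3/4 * nrm D a + 3/4 * nrm D b - 5/12 * (\<Sum>j<D. if j \<in> G then ?x j else 0)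
        - 5/12 * (\<Sum>j<D. if j \<notin> G then ?y j else 0)"
    by (simp add: nrm_def sum.distrib sum_subtractf sum_distrib_left)
  also have "\<dots> \<le> 17/18" using na nb pa pb by linarith
  finally show ?thesis .
qed

lemma run_nrm:
  assumes n: "0 < n" and wf: "wf_qalg n W Q" and A: "okS n W A" and B: "okS n W B"
    and t: "t \<le> alg_T Q"
  shows "nrm (qdim n W (alg_ws Q)) (run_state n W Q A B t) = 1"
  using t
proof (induction t)
  case 0
  have D: "0 < qdim n W (alg_ws Q)" using n wf by (simp add: qdim_def wf_qalg_def)
  have u: "unitary (qdim n W (alg_ws Q)) (alg_U Q 0)" using wf by (simp add: wf_qalg_def)
  have z: "nrm (qdim n W (alg_ws Q)) (\<lambda>j. if j = 0 then 1 else 0) = 1"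
  proof -
    have "nrm (qdim n W (alg_ws Q)) (\<lambda>j. if j = 0 then 1 else 0) = (\<Sum>j<qdim n W (alg_ws Q). if j = 0 then 1 else 0)"
      unfolding nrm_def by (rule sum.cong) auto
    thus ?thesis using D by simp
  qed
  show ?case using unitary_nrm[OF u] z by simp
next
  case (Suc t)
  have u: "unitary (qdim n W (alg_ws Q)) (alg_U Q (Suc t))" using wf Suc by (simp add: wf_qalg_def)
  have S: "okS n W (if alg_choice Q (Suc t) then A else B)" using A B by simp
  show ?case using Suc unitary_nrm[OF u] query_nrm[OF n S] by (simp add: Let_def)
qed

lemma run_step:
  assumes n: "0 < n" and wf: "wf_qalg n W Q" and A: "okS n W A" and B: "okS n W B"
    and A': "okS n W A'" and B': "okS n W B'"
    and agA: "\<And>m. m < n \<Longrightarrow> m \<noteq> i0 \<Longrightarrow> A ! m = A' ! m"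
    and agB: "\<And>m. m < n \<Longrightarrow> m \<noteq> i0 \<Longrightarrow> B ! m = B' ! m"
    and t: "Suc t \<le> alg_T Q"
  defines "D \<equiv> qdim n W (alg_ws Q)"
  shows "cmod (ip D (run_state n W Q A B (Suc t)) (run_state n W Q A' B' (Suc t)))
     \<ge> cmod (ip D (run_state n W Q A B t) (run_state n W Q A' B' t))
       - blk n W D i0 (run_state n W Q A B t) - blk n W D i0 (run_state n W Q A' B' t)"
proof -
  have u: "unitary D (alg_U Q (Suc t))" using wf t by (simp add: wf_qalg_def D_def)
  let ?S = "if alg_choice Q (Suc t) then A else B" and ?S' = "if alg_choice Q (Suc t) then A' else B'"
  have S: "okS n W ?S" "okS n W ?S'" using A B A' B' by simp_all
  have ag: "\<And>m. m < n \<Longrightarrow> m \<noteq> i0 \<Longrightarrow> ?S ! m = ?S' ! m" using agA agB by simp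
  have e: "ip D (run_state n W Q A B (Suc t)) (run_state n W Q A' B' (Suc t))
    = ip D (mat_apply D (query_op n W (alg_ws Q) ?S) (run_state n W Q A B t))
           (mat_apply D (query_op n W (alg_ws Q) ?S') (run_state n W Q A' B' t))"
    using unitary_ip[OF u] by (simp add: Let_def D_def)
  have d: "cmod (ip D (mat_apply D (query_op n W (alg_ws Q) ?S) (run_state n W Q A B t))
           (mat_apply D (query_op n W (alg_ws Q) ?S') (run_state n W Q A' B' t))
      - ip D (run_state n W Q A B t) (run_state n W Q A' B' t))
     \<le> blk n W D i0 (run_state n W Q A B t) + blk n W D i0 (run_state n W Q A' B' t)"
    unfolding D_def by (rule query_delta[OF n S ag])
  have "cmod (ip D (run_state n W Q A B t) (run_state n W Q A' B' t))
     \<le> cmod (ip D (mat_apply D (query_op n W (alg_ws Q) ?S) (run_state n W Q A B t))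
           (mat_apply D (query_op n W (alg_ws Q) ?S') (run_state n W Q A' B' t)))
       + cmod (ip D (mat_apply D (query_op n W (alg_ws Q) ?S) (run_state n W Q A B t))
           (mat_apply D (query_op n W (alg_ws Q) ?S') (run_state n W Q A' B' t))
      - ip D (run_state n W Q A B t) (run_state n W Q A' B' t))"
    by (metis norm_triangle_ineq2 norm_minus_commute add.commute diff_le_eq)
  thus ?thesis using d by (simp only: e)
qed

lemma run0_same:
  "run_state n W Q A B 0 = run_state n W Q A' B' 0" by simp

lemma sub_sep:
  assumes "sublist w (xs @ [s] @ ys)" "s \<notin> set w"
  shows "sublist w xs \<or> sublist w ys"
proof -
  from assms(1) consider "sublist w xs" | "sublist w ([s] @ ys)"
    | w1 w2 where "w = w1 @ w2" "suffix w1 xs" "prefix w2 ([s] @ ys)"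
    unfolding sublist_append by blast
  thus ?thesis
  proof cases
    case 2
    from 2 consider "sublist w [s]" | "sublist w ys"
      | w1 w2 where "w = w1 @ w2" "suffix w1 [s]" "prefix w2 ys"
      unfolding sublist_append by blast
    thus ?thesis
    proof cases
      case 1 hence "set w \<subseteq> {s}" using set_mono_sublist by fastforce
      hence "w = []" using assms(2) by (cases w) auto
      thus ?thesis by simp
    next
      case 3
      hence "w1 = [] \<or> w1 = [s]" by (auto simp: suffix_def Cons_eq_append_conv append_eq_Cons_conv)
      thus ?thesis using 3 assms(2) by (auto intro: prefix_imp_sublist)
    qed simp
  next
    case 3
    show ?thesis
    proof (cases w2)
      case Nil thus ?thesis using 3 by (auto intro: suffix_imp_sublist)
    next
      case (Cons a r)
      hence "a = s" using 3 by (auto simp: prefix_def)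
      thus ?thesis using 3 Cons assms(2) by auto
    qed
  qed simp
qed

lemma sub_left:
  assumes "sublist w (xs @ ys)" "set w \<inter> set ys = {}" "w \<noteq> []"
  shows "sublist w xs"
proof -
  from assms(1) consider "sublist w xs" | "sublist w ys"
    | w1 w2 where "w = w1 @ w2" "suffix w1 xs" "prefix w2 ys"
    unfolding sublist_append by blast
  thus ?thesis
  proof cases
    case 2
    hence "set w \<subseteq> set ys" by (rule set_mono_sublist)
    thus ?thesis using assms(2,3) by (cases w) auto
  next
    case 3
    show ?thesis
    proof (cases w2)
      case Nil thus ?thesis using 3 by (auto intro: suffix_imp_sublist)
    next
      case (Cons a r)
      hence "a \<in> set ys" using 3 by (auto simp: prefix_def)
      thus ?thesis using 3 Cons assms(2) by auto
    qed
  qed simp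
qed

lemma sub_eq_len:
  assumes "sublist w X" "length X \<le> length w" shows "w = X"
  using assms by (auto simp: sublist_def)

lemma lcs_core:
  fixes a b X RA RB w :: "nat list"
  assumes a: "a = replicate L 2 @ [3] @ X @ RA" and b: "b = replicate L 2 @ [5] @ X @ RB"
    and RA: "set RA \<inter> set b = {}" and b3: "3 \<notin> set b"
    and w: "sublist w a" "sublist w b" "w \<noteq> []"
  shows "(w = replicate (length w) 2 \<and> length w \<le> L) \<or> sublist w X"
proof -
  have sw: "set w \<subseteq> set b" using w(2) by (rule set_mono_sublist)
  have "3 \<notin> set w" using sw b3 by auto
  hence "sublist w (replicate L 2) \<or> sublist w (X @ RA)"
    using sub_sep[of w "replicate L 2" 3 "X @ RA"] w(1) a by simp
  thus ?thesis
  proof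
    assume h: "sublist w (replicate L (2::nat))"
    hence "set w \<subseteq> {2}" using set_mono_sublist by fastforce
    hence "w = replicate (length w) 2" by (metis replicate_length_same singletonD subsetD)
    thus ?thesis using sublist_length_le[OF h] by simp
  next
    assume "sublist w (X @ RA)"
    moreover have "set w \<inter> set RA = {}" using sw RA by auto
    ultimately show ?thesis using sub_left w(3) by blast
  qed
qed

lemma answers_small:
  assumes a: "a = replicate L 2 @ [3] @ X @ RA" and b: "b = replicate L 2 @ [5] @ X @ RB"
    and RA: "set RA \<inter> set b = {}" and b3: "3 \<notin> set b"
    and lt: "length X < L"
    and dA: "decode A = a" and dB: "decode B = b"
  shows "el_lcs_answers A B \<subseteq> {1}"
proof
  fix e assume "e \<in> el_lcs_answers A B"
  then obtain w where e: "e = enc_length w" and lw: "is_LCSubstr a b w"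
    unfolding el_lcs_answers_def using dA dB by auto
  have "sublist (replicate L (2::nat)) a" "sublist (replicate L (2::nat)) b" using a b by auto
  hence "L \<le> length w" using lw by (auto simp: is_LCSubstr_def)
  hence ne: "w \<noteq> []" using lt by auto
  have "\<not> sublist w X" using sublist_length_le \<open>L \<le> length w\<close> lt by fastforce
  hence "w = replicate (length w) 2" using lcs_core[OF a b RA b3] lw ne by (auto simp: is_LCSubstr_def)
  hence "enc_length w = enc_length (replicate (length w) (2::nat))" by simp
  also have "\<dots> = 1" using ne unfolding enc_length_def by (simp add: remdups_adj_replicate)
  finally have "enc_length w = 1" .
  thus "e \<in> {1}" using e by simp
qed

lemma answers_big:
  assumes a: "a = replicate L 2 @ [3] @ X @ RA" and b: "b = replicate L 2 @ [5] @ X @ RB"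
    and RA: "set RA \<inter> set b = {}" and b3: "3 \<notin> set b"
    and gt: "L < length X"
    and dA: "decode A = a" and dB: "decode B = b"
  shows "el_lcs_answers A B \<subseteq> {enc_length X}"
proof
  fix e assume "e \<in> el_lcs_answers A B"
  then obtain w where e: "e = enc_length w" and lw: "is_LCSubstr a b w"
    unfolding el_lcs_answers_def using dA dB by auto
  have "sublist X a" "sublist X b" using a b by (auto intro: sublist_appendI[of X "_ @ [_]", simplified])
  hence "length X \<le> length w" using lw by (auto simp: is_LCSubstr_def)
  hence ne: "w \<noteq> []" using gt by auto
  have "\<not> (w = replicate (length w) 2 \<and> length w \<le> L)" using \<open>length X \<le> length w\<close> gt by auto
  hence "sublist w X" using lcs_core[OF a b RA b3] lw ne by (auto simp: is_LCSubstr_def)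
  hence "w = X" using sub_eq_len \<open>length X \<le> length w\<close> by blast
  thus "e \<in> {enc_length X}" using e by simp
qed

lemma enc_length_not1:
  assumes "x \<in> set X" "y \<in> set X" "x \<noteq> y" shows "enc_length X \<noteq> 1"
proof
  assume "enc_length X = 1"
  then obtain c where "remdups_adj X = [c]" unfolding enc_length_def by (metis length_0_conv length_Suc_conv One_nat_def)
  hence "set X = {c}" by (metis remdups_adj_set list.set(1) list.set(2))
  thus False using assms by auto
qed

definition chA :: "nat \<Rightarrow> nat \<Rightarrow> nat" where
  "chA p i = (if i = 0 then 2 else if i = 1 then 3 else if i < p + 2 then i mod 2 else 2 * i + 4)"
definition chB :: "nat \<Rightarrow> nat \<Rightarrow> nat" where
  "chB p i = (if i = 0 then 2 else if i = 1 then 5 else if i < p + 2 then i mod 2 else 2 * i + 5)"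
definition lnz :: "nat \<Rightarrow> nat set \<Rightarrow> nat \<Rightarrow> nat" where
  "lnz L z i = (if i = 0 then L else if i \<in> z \<and> 2 \<le> i then 3 else 1)"
definition inst :: "(nat \<Rightarrow> nat) \<Rightarrow> nat \<Rightarrow> nat set \<Rightarrow> nat \<Rightarrow> rle" where
  "inst ch L z n = map (\<lambda>i. (ch i, lnz L z i)) [0..<n]"
definition Xs :: "nat \<Rightarrow> nat set \<Rightarrow> nat list" where
  "Xs p z = concat (map (\<lambda>i. replicate (if i \<in> z then 3 else 1) (i mod 2)) [2..<p + 2])"

lemma decode_inst: "decode (inst ch L z n) = concat (map (\<lambda>i. replicate (lnz L z i) (ch i)) [0..<n])"
  by (simp add: decode_def inst_def comp_def)

lemma upt_split: "p + 2 \<le> n \<Longrightarrow> [0..<n] = 0 # 1 # [2..<p + 2] @ [p + 2..<n]"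
proof -
  assume h: "p + 2 \<le> n"
  have "[0..<n] = [0..<p + 2] @ [p + 2..<n]" using h
    by (metis le_add_diff_inverse upt_add_eq_append zero_le)
  also have "[0..<p + 2] = [0..<2] @ [2..<p + 2]"
    using upt_add_eq_append[of 0 2 p] by (simp add: add.commute)
  also have "[0..<2] = [0, 1::nat]" by (simp add: numeral_2_eq_2)
  finally show ?thesis by simp
qed

lemma mid_eq: "(ch::nat\<Rightarrow>nat) = chA p \<or> ch = chB p \<Longrightarrow>
  concat (map (\<lambda>i. replicate (lnz L z i) (ch i)) [2..<p + 2]) = Xs p z"
  unfolding Xs_def by (rule arg_cong[where f=concat], rule map_cong) (auto simp: lnz_def chA_def chB_def)

lemma decode_A:
  assumes "p + 2 \<le> n"
  shows "decode (inst (chA p) L z n) = replicate L 2 @ [3] @ Xs p z @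
     concat (map (\<lambda>i. replicate (lnz L z i) (chA p i)) [p + 2..<n])"
  using mid_eq[of "chA p" p L z] by (simp add: decode_inst upt_split[OF assms] lnz_def chA_def)

lemma decode_B:
  assumes "p + 2 \<le> n"
  shows "decode (inst (chB p) L z n) = replicate L 2 @ [5] @ Xs p z @
     concat (map (\<lambda>i. replicate (lnz L z i) (chB p i)) [p + 2..<n])"
  using mid_eq[of "chB p" p L z] by (simp add: decode_inst upt_split[OF assms] lnz_def chB_def)

lemma set_decB: "2 \<le> p \<Longrightarrow> set (decode (inst (chB p) L z n)) \<subseteq> {0,1,2,5} \<union> {c. odd c \<and> 9 \<le> c}"
  unfolding decode_inst by (auto simp: chB_def split: if_splits)

lemma set_RA: "set (concat (map (\<lambda>i. replicate (lnz L z i) (chA p i)) [p + 2..<n])) \<subseteq> {c. even c \<and> 4 \<le> c}"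
  by (auto simp: chA_def)

lemma len_X:
  assumes "z \<subseteq> {2..<p+2}"
  shows "length (Xs p z) = p + 2 * card z"
proof -
  define I where "I = {2..<p+2}"
  have fI: "finite I" by (simp add: I_def)
  have zI: "I \<inter> z = z" using assms by (auto simp: I_def)
  have "length (Xs p z) = sum_list (map (\<lambda>i. if i \<in> z then 3 else 1) [2..<p+2])"
    by (simp add: Xs_def length_concat comp_def)
  also have "\<dots> = (\<Sum>i\<in>I. if i \<in> z then 3 else 1)" unfolding I_def
    by (simp only: sum_list_distinct_conv_sum_set distinct_upt set_upt)
  also have "\<dots> = (\<Sum>i\<in>I. 1 + (if i \<in> z then 2 else 0))"
    by (rule sum.cong) auto
  also have "\<dots> = card I + (\<Sum>i\<in>I. if i \<in> z then 2 else 0)"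
    by (simp only: sum.distrib card_eq_sum)
  also have "(\<Sum>i\<in>I. if i \<in> z then 2 else 0) = (\<Sum>i\<in>I \<inter> z. 2::nat)"
    using sum.inter_restrict[OF fI, of "\<lambda>_. 2::nat" z] by simp
  also have "\<dots> = 2 * card z" by (simp add: zI)
  also have "card I = p" by (simp add: I_def)
  finally show ?thesis .
qed

lemma X01: assumes "2 \<le> p" shows "0 \<in> set (Xs p z) \<and> 1 \<in> set (Xs p z)"
proof
  show "0 \<in> set (Xs p z)" unfolding Xs_def set_concat set_map
    unfolding set_upt image_image by (rule UN_I[of 2]) (use assms in auto)
  show "1 \<in> set (Xs p z)" unfolding Xs_def set_concat set_map
    unfolding set_upt image_image by (rule UN_I[of 3]) (use assms in auto)
qed

lemma inst_len: "length (inst ch L z n) = n" by (simp add: inst_def)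

lemma inst_nth: "m < n \<Longrightarrow> inst ch L z n ! m = (ch m, lnz L z m)" by (simp add: inst_def)

lemma inst_agree:
  "m < n \<Longrightarrow> m \<noteq> i \<Longrightarrow> inst ch L z n ! m = inst ch L (insert i z) n ! m"
  by (simp add: inst_nth lnz_def)

lemma mod2_Suc: "(i::nat) mod 2 \<noteq> Suc i mod 2" by presburger

lemma adjA: assumes "2 \<le> p" shows "chA p i \<noteq> chA p (Suc i)"
proof -
  consider "i = 0" | "i = 1" | "2 \<le> i \<and> Suc i < p + 2" | "2 \<le> i \<and> i < p + 2 \<and> \<not> Suc i < p + 2" | "p + 2 \<le> i" by linarith
  thus ?thesis
  proof cases
    case 3 thus ?thesis using mod2_Suc[of i] by (simp add: chA_def)
  next
    case 4
    have "i mod 2 < 2" by simp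
    thus ?thesis using 4 by (simp add: chA_def)
  qed (use assms in \<open>auto simp: chA_def\<close>)
qed

lemma adjB: assumes "2 \<le> p" shows "chB p i \<noteq> chB p (Suc i)"
proof -
  consider "i = 0" | "i = 1" | "2 \<le> i \<and> Suc i < p + 2" | "2 \<le> i \<and> i < p + 2 \<and> \<not> Suc i < p + 2" | "p + 2 \<le> i" by linarith
  thus ?thesis
  proof cases
    case 3 thus ?thesis using mod2_Suc[of i] by (simp add: chB_def)
  next
    case 4
    have "i mod 2 < 2" by simp
    thus ?thesis using 4 by (simp add: chB_def)
  qed (use assms in \<open>auto simp: chB_def\<close>)
qed

lemma valid_A:
  assumes "2 \<le> p" "p + 2 \<le> n" "0 < L" "L < 2 ^ W" "2 * n + 6 \<le> 2 ^ W"
  shows "valid_rle W (inst (chA p) L z n)"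
  unfolding valid_rle_def
proof (intro conjI allI impI ballI)
  fix x assume "x \<in> set (inst (chA p) L z n)"
  then obtain i where i: "i < n" "x = (chA p i, lnz L z i)" by (auto simp: inst_def)
  have "chA p i < 2 ^ W" using assms i by (auto simp: chA_def)
  moreover have "0 < lnz L z i \<and> lnz L z i < 2 ^ W" using assms by (auto simp: lnz_def)
  ultimately show "case x of (c, r) \<Rightarrow> c < 2 ^ W \<and> 0 < r \<and> r < 2 ^ W" using i by simp
next
  fix i assume "Suc i < length (inst (chA p) L z n)"
  hence "Suc i < n" by (simp add: inst_len)
  thus "fst (inst (chA p) L z n ! i) \<noteq> fst (inst (chA p) L z n ! Suc i)"
    using assms adjA[of p i] by (simp add: inst_nth)
qed

lemma valid_B:
  assumes "2 \<le> p" "p + 2 \<le> n" "0 < L" "L < 2 ^ W" "2 * n + 6 \<le> 2 ^ W"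
  shows "valid_rle W (inst (chB p) L z n)"
  unfolding valid_rle_def
proof (intro conjI allI impI ballI)
  fix x assume "x \<in> set (inst (chB p) L z n)"
  then obtain i where i: "i < n" "x = (chB p i, lnz L z i)" by (auto simp: inst_def)
  have "chB p i < 2 ^ W" using assms i by (auto simp: chB_def)
  moreover have "0 < lnz L z i \<and> lnz L z i < 2 ^ W" using assms by (auto simp: lnz_def)
  ultimately show "case x of (c, r) \<Rightarrow> c < 2 ^ W \<and> 0 < r \<and> r < 2 ^ W" using i by simp
next
  fix i assume "Suc i < length (inst (chB p) L z n)"
  hence "Suc i < n" by (simp add: inst_len)
  thus "fst (inst (chB p) L z n ! i) \<noteq> fst (inst (chB p) L z n ! Suc i)"
    using assms adjB[of p i] by (simp add: inst_nth)
qed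

lemma answers_A:
  assumes "2 \<le> p" "p + 2 \<le> n" "length (Xs p z) < L"
  shows "el_lcs_answers (inst (chA p) L z n) (inst (chB p) L z n) \<subseteq> {1}"
proof (rule answers_small[OF refl refl _ _ assms(3) decode_A[OF assms(2)] decode_B[OF assms(2)]])
  have sb: "set (replicate L 2 @ [5] @ Xs p z @ concat (map (\<lambda>i. replicate (lnz L z i) (chB p i)) [p + 2..<n]))
     \<subseteq> {0,1,2,5} \<union> {c. odd c \<and> 9 \<le> c}"
    using set_decB[OF assms(1), of L z n] decode_B[OF assms(2), of L z] by simp
  have sa: "set (concat (map (\<lambda>i. replicate (lnz L z i) (chA p i)) [p + 2..<n])) \<subseteq> {c. even c \<and> 4 \<le> c}"
    by (rule set_RA)
  have dj: "{c::nat. even c \<and> 4 \<le> c} \<inter> ({0,1,2,5} \<union> {c. odd c \<and> 9 \<le> c}) = {}" by auto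
  show "set (concat (map (\<lambda>i. replicate (lnz L z i) (chA p i)) [p + 2..<n])) \<inter>
    set (replicate L 2 @ [5] @ Xs p z @ concat (map (\<lambda>i. replicate (lnz L z i) (chB p i)) [p + 2..<n])) = {}"
    using sa sb dj by blast
  show "3 \<notin> set (replicate L 2 @ [5] @ Xs p z @ concat (map (\<lambda>i. replicate (lnz L z i) (chB p i)) [p + 2..<n]))"
  proof -
    have "(3::nat) \<notin> {0,1,2,5} \<union> {c. odd c \<and> 9 \<le> c}" by simp
    thus ?thesis using sb by blast
  qed
qed

lemma answers_B:
  assumes "2 \<le> p" "p + 2 \<le> n" "L < length (Xs p z)"
  shows "el_lcs_answers (inst (chA p) L z n) (inst (chB p) L z n) \<subseteq> {enc_length (Xs p z)}"
proof (rule answers_big[OF refl refl _ _ assms(3) decode_A[OF assms(2)] decode_B[OF assms(2)]])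
  have sb: "set (replicate L 2 @ [5] @ Xs p z @ concat (map (\<lambda>i. replicate (lnz L z i) (chB p i)) [p + 2..<n]))
     \<subseteq> {0,1,2,5} \<union> {c. odd c \<and> 9 \<le> c}"
    using set_decB[OF assms(1), of L z n] decode_B[OF assms(2), of L z] by simp
  have sa: "set (concat (map (\<lambda>i. replicate (lnz L z i) (chA p i)) [p + 2..<n])) \<subseteq> {c. even c \<and> 4 \<le> c}"
    by (rule set_RA)
  have dj: "{c::nat. even c \<and> 4 \<le> c} \<inter> ({0,1,2,5} \<union> {c. odd c \<and> 9 \<le> c}) = {}" by auto
  show "set (concat (map (\<lambda>i. replicate (lnz L z i) (chA p i)) [p + 2..<n])) \<inter>
    set (replicate L 2 @ [5] @ Xs p z @ concat (map (\<lambda>i. replicate (lnz L z i) (chB p i)) [p + 2..<n])) = {}"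
    using sa sb dj by blast
  show "3 \<notin> set (replicate L 2 @ [5] @ Xs p z @ concat (map (\<lambda>i. replicate (lnz L z i) (chB p i)) [p + 2..<n]))"
  proof -
    have "(3::nat) \<notin> {0,1,2,5} \<union> {c. odd c \<and> 9 \<le> c}" by simp
    thus ?thesis using sb by blast
  qed
qed

lemma valid_okS:
  assumes v: "valid_rle W S" and l: "length S = n"
  shows "okS n W S"
proof -
  have h: "\<forall>x\<in>set S. fst x < 2 ^ W \<and> snd x < 2 ^ W"
  proof
    fix x assume x: "x \<in> set S"
    obtain c r where cr: "x = (c, r)" by (cases x)
    have "c < 2 ^ W \<and> 0 < r \<and> r < 2 ^ W" using v x cr unfolding valid_rle_def by fastforce
    thus "fst x < 2 ^ W \<and> snd x < 2 ^ W" using cr by simp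
  qed
  show ?thesis unfolding okS_def using l h nth_mem by blast
qed

lemma reindex_pairs:
  fixes f :: "nat set \<Rightarrow> nat \<Rightarrow> real"
  assumes fI: "finite I"
  shows "(\<Sum>z\<in>{z. z \<subseteq> I \<and> card z = k}. \<Sum>i\<in>I - z. f (insert i z) i)
       = (\<Sum>y\<in>{y. y \<subseteq> I \<and> card y = Suc k}. \<Sum>i\<in>y. f y i)"
proof -
  have fZ: "finite {z. z \<subseteq> I \<and> card z = k}" using fI by simp
  have fY: "finite {y. y \<subseteq> I \<and> card y = Suc k}" using fI by simp
  have "(\<Sum>z\<in>{z. z \<subseteq> I \<and> card z = k}. \<Sum>i\<in>I - z. f (insert i z) i)
      = (\<Sum>(z, i)\<in>Sigma {z. z \<subseteq> I \<and> card z = k} (\<lambda>z. I - z). f (insert i z) i)"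
    using sum.Sigma[OF fZ, of "\<lambda>z. I - z" "\<lambda>z i. f (insert i z) i"] fI by simp
  also have "\<dots> = (\<Sum>(y, i)\<in>Sigma {y. y \<subseteq> I \<and> card y = Suc k} (\<lambda>y. y). f y i)"
  proof (rule sum.reindex_bij_witness[where j="\<lambda>(z, i). (insert i z, i)" and i="\<lambda>(y, i). (y - {i}, i)"])
    fix a assume "a \<in> Sigma {z. z \<subseteq> I \<and> card z = k} (\<lambda>z. I - z)"
    then obtain z i where a: "a = (z, i)" "z \<subseteq> I" "card z = k" "i \<in> I" "i \<notin> z" by auto
    have fz: "finite z" using a fI finite_subset by blast
    show "(case case a of (z, i) \<Rightarrow> (insert i z, i) of (y, i) \<Rightarrow> (y - {i}, i)) = a" using a by auto
    show "(case a of (z, i) \<Rightarrow> (insert i z, i)) \<in> Sigma {y. y \<subseteq> I \<and> card y = Suc k} (\<lambda>y. y)"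
      using a fz by auto
    show "(case case a of (z, i) \<Rightarrow> (insert i z, i) of (y, i) \<Rightarrow> f y i) = (case a of (z, i) \<Rightarrow> f (insert i z) i)"
      using a by simp
  next
    fix b assume "b \<in> Sigma {y. y \<subseteq> I \<and> card y = Suc k} (\<lambda>y. y)"
    then obtain y i where b: "b = (y, i)" "y \<subseteq> I" "card y = Suc k" "i \<in> y" by auto
    have fy: "finite y" using b fI finite_subset by blast
    show "(case case b of (y, i) \<Rightarrow> (y - {i}, i) of (z, i) \<Rightarrow> (insert i z, i)) = b" using b by auto
    show "(case b of (y, i) \<Rightarrow> (y - {i}, i)) \<in> Sigma {z. z \<subseteq> I \<and> card z = k} (\<lambda>z. I - z)"
      using b fy by auto
  qed
  also have "\<dots> = (\<Sum>y\<in>{y. y \<subseteq> I \<and> card y = Suc k}. \<Sum>i\<in>y. f y i)"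
  proof -
    have "\<forall>y\<in>{y. y \<subseteq> I \<and> card y = Suc k}. finite y"
    proof
      fix y assume "y \<in> {y. y \<subseteq> I \<and> card y = Suc k}"
      hence "y \<subseteq> I" by simp
      thus "finite y" using fI by (rule finite_subset)
    qed
    thus ?thesis using sum.Sigma[OF fY, of "\<lambda>y. y" "\<lambda>y i. f y i"] by simp
  qed
  finally show ?thesis .
qed

lemma main_bound:
  assumes n6: "6 \<le> n" and W: "2 * n + 6 \<le> W" and sol: "solves_EL_LCS_RLE n W Q"
  shows "real n / 144 \<le> real (alg_T Q)"
proof -
  define kk where "kk = (n - 4) div 2"
  define p where "p = 2 * kk + 1"
  define L where "L = 4 * kk + 2"
  define I where "I = {2..<p + 2}"
  have kk1: "1 \<le> kk" using n6 by (simp add: kk_def)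
  have p2: "2 \<le> p" using kk1 by (simp add: p_def)
  have pn: "p + 2 \<le> n" using n6 by (simp add: p_def kk_def)
  have nk: "n \<le> 2 * kk + 5" using n6 by (simp add: kk_def; linarith)
  have n0: "0 < n" using n6 by simp
  have fI: "finite I" by (simp add: I_def)
  have cI: "card I = p" by (simp add: I_def)
  have Wlt: "W < 2 ^ W" by (rule less_exp)
  have Wb: "2 * n + 6 \<le> 2 ^ W"
  proof -
    have "2 * n + 6 \<le> W" by (rule W)
    also have "\<dots> \<le> 2 ^ W" using Wlt by simp
    finally show ?thesis .
  qed
  have L0: "0 < L" by (simp add: L_def)
  have LW: "L < 2 ^ W" using Wb pn n6 by (simp add: L_def p_def; linarith)
  define Ain where "Ain z = inst (chA p) L z n" for z
  define Bin where "Bin z = inst (chB p) L z n" for z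
  have vA: "valid_rle W (Ain z)" for z unfolding Ain_def by (rule valid_A[OF p2 pn L0 LW Wb])
  have vB: "valid_rle W (Bin z)" for z unfolding Bin_def by (rule valid_B[OF p2 pn L0 LW Wb])
  have lA: "length (Ain z) = n" for z by (simp add: Ain_def inst_len)
  have lB: "length (Bin z) = n" for z by (simp add: Bin_def inst_len)
  have okA: "okS n W (Ain z)" for z using valid_okS[OF vA lA] .
  have okB: "okS n W (Bin z)" for z using valid_okS[OF vB lB] .
  have wf: "wf_qalg n W Q" using sol by (simp add: solves_EL_LCS_RLE_def)
  have succ: "success_prob n W Q (Ain z) (Bin z) \<ge> 2/3" for z
    using sol vA vB lA lB by (simp add: solves_EL_LCS_RLE_def)
  define T where "T = alg_T Q"
  define D where "D = qdim n W (alg_ws Q)"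
  define \<psi> where "\<psi> z t = run_state n W Q (Ain z) (Bin z) t" for z t
  define Zs where "Zs = {z. z \<subseteq> I \<and> card z = kk}"
  define Ys where "Ys = {y. y \<subseteq> I \<and> card y = Suc kk}"
  have fZ: "finite Zs" using fI by (simp add: Zs_def)
  have cZ: "card Zs = p choose kk" using n_subsets[OF fI, of kk] by (simp add: Zs_def cI)
  have cY: "card Ys = card Zs"
  proof -
    have "card Ys = p choose Suc kk" using n_subsets[OF fI, of "Suc kk"] by (simp add: Ys_def cI)
    also have "\<dots> = p choose (p - Suc kk)" by (rule binomial_symmetric) (simp add: p_def)
    also have "p - Suc kk = kk" by (simp add: p_def)
    finally show ?thesis using cZ by simp
  qed
  have cZpos: "0 < card Zs" using cZ by (simp add: p_def)
  have nrm1: "nrm D (\<psi> z t) = 1" if "t \<le> T" for z t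
    unfolding \<psi>_def D_def using run_nrm[OF n0 wf okA okB] that by (simp add: T_def)
  have psiT: "\<psi> w T = run_state n W Q (Ain w) (Bin w) (alg_T Q)" for w
    unfolding \<psi>_def T_def by simp
  define F where "F t = (\<Sum>z\<in>Zs. \<Sum>i\<in>I - z. cmod (ip D (\<psi> z t) (\<psi> (insert i z) t)))" for t

  have F0: "F 0 = real (card Zs) * real (kk + 1)"
  proof -
    have "F 0 = (\<Sum>z\<in>Zs. \<Sum>i\<in>I - z. 1)"
    proof -
      have "cmod (ip D (\<psi> z 0) (\<psi> (insert i z) 0)) = 1" for z i
      proof -
        have "\<psi> (insert i z) 0 = \<psi> z 0" by (simp add: \<psi>_def)
        thus ?thesis using nrm1[of 0 z] by (simp add: ip_self)
      qed
      thus ?thesis by (simp add: F_def)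
    qed
    also have "\<dots> = (\<Sum>z\<in>Zs. real (kk + 1))"
    proof (rule sum.cong[OF refl])
      fix z assume "z \<in> Zs"
      hence zI': "z \<subseteq> I" "card z = kk" by (simp_all add: Zs_def)
      have "finite z" using finite_subset[OF zI'(1) fI] .
      hence "card (I - z) = card I - card z" by (rule card_Diff_subset[OF _ zI'(1)])
      hence "card (I - z) = kk + 1" using zI' cI by (simp add: p_def)
      thus "(\<Sum>i\<in>I - z. 1) = real (kk + 1)" by simp
    qed
    finally show ?thesis by simp
  qed

  have Fstep: "F (Suc t) \<ge> F t - 2 * real (card Zs)" if tT: "Suc t \<le> T" for t
  proof -
    have st: "cmod (ip D (\<psi> z (Suc t)) (\<psi> (insert i z) (Suc t)))
      \<ge> cmod (ip D (\<psi> z t) (\<psi> (insert i z) t)) - blk n W D i (\<psi> z t) - blk n W D i (\<psi> (insert i z) t)" for z i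
    proof -
      have agA: "\<And>m. m < n \<Longrightarrow> m \<noteq> i \<Longrightarrow> Ain z ! m = Ain (insert i z) ! m"
        unfolding Ain_def by (rule inst_agree)
      have agB: "\<And>m. m < n \<Longrightarrow> m \<noteq> i \<Longrightarrow> Bin z ! m = Bin (insert i z) ! m"
        unfolding Bin_def by (rule inst_agree)
      have tT': "Suc t \<le> alg_T Q" using tT by (simp add: T_def)
      show ?thesis unfolding \<psi>_def D_def
        by (rule run_step[OF n0 wf okA okB okA okB agA agB tT'])
    qed
    have a1: "(\<Sum>z\<in>Zs. \<Sum>i\<in>I - z. cmod (ip D (\<psi> z t) (\<psi> (insert i z) t))
          - blk n W D i (\<psi> z t) - blk n W D i (\<psi> (insert i z) t)) \<le> F (Suc t)"
      unfolding F_def by (intro sum_mono st)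
    have a2: "(\<Sum>z\<in>Zs. \<Sum>i\<in>I - z. cmod (ip D (\<psi> z t) (\<psi> (insert i z) t))
          - blk n W D i (\<psi> z t) - blk n W D i (\<psi> (insert i z) t)) = F t - (\<Sum>z\<in>Zs. \<Sum>i\<in>I - z. blk n W D i (\<psi> z t))
         - (\<Sum>z\<in>Zs. \<Sum>i\<in>I - z. blk n W D i (\<psi> (insert i z) t))"
      by (simp add: F_def sum_subtractf)
    have a: "F (Suc t) \<ge> F t - (\<Sum>z\<in>Zs. \<Sum>i\<in>I - z. blk n W D i (\<psi> z t))
         - (\<Sum>z\<in>Zs. \<Sum>i\<in>I - z. blk n W D i (\<psi> (insert i z) t))" using a1 a2 by linarith
    have b1: "(\<Sum>z\<in>Zs. \<Sum>i\<in>I - z. blk n W D i (\<psi> z t)) \<le> real (card Zs)"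
    proof -
      have "(\<Sum>z\<in>Zs. \<Sum>i\<in>I - z. blk n W D i (\<psi> z t)) \<le> (\<Sum>z\<in>Zs. 1)"
      proof (rule sum_mono)
        fix z show "(\<Sum>i\<in>I - z. blk n W D i (\<psi> z t)) \<le> 1"
          using blk_sum_le[of "I - z" n W D "\<psi> z t"] fI nrm1[of t z] tT by simp
      qed
      thus ?thesis by simp
    qed
    have b2: "(\<Sum>z\<in>Zs. \<Sum>i\<in>I - z. blk n W D i (\<psi> (insert i z) t)) \<le> real (card Zs)"
    proof -
      have "(\<Sum>z\<in>Zs. \<Sum>i\<in>I - z. blk n W D i (\<psi> (insert i z) t))
          = (\<Sum>y\<in>Ys. \<Sum>i\<in>y. blk n W D i (\<psi> y t))"
        unfolding Zs_def Ys_def by (rule reindex_pairs[OF fI])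
      also have "\<dots> \<le> (\<Sum>y\<in>Ys. 1)"
      proof (rule sum_mono)
        fix y assume "y \<in> Ys"
        hence "y \<subseteq> I" by (simp add: Ys_def)
        hence "finite y" using fI by (rule finite_subset)
        thus "(\<Sum>i\<in>y. blk n W D i (\<psi> y t)) \<le> 1"
          using blk_sum_le[of y n W D "\<psi> y t"] nrm1[of t y] tT by simp
      qed
      finally show ?thesis using cY by simp
    qed
    show ?thesis using a b1 b2 by linarith
  qed

  have Fdec: "F t \<ge> F 0 - 2 * real t * real (card Zs)" if "t \<le> T" for t
    using that
  proof (induction t)
    case (Suc t)
    have t: "t \<le> T" using Suc.prems by simp
    have ih: "F t \<ge> F 0 - 2 * real t * real (card Zs)" using Suc.IH[OF t] .
    have st: "F (Suc t) \<ge> F t - 2 * real (card Zs)" using Fstep[OF Suc.prems] .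
    have e: "2 * real (Suc t) * real (card Zs) = 2 * real t * real (card Zs) + 2 * real (card Zs)"
      by (simp add: algebra_simps)
    show ?case using ih st e by linarith
  qed simp

  have FT: "F T \<le> real (card Zs) * real (kk + 1) * (17/18)"
  proof -
    have "F T \<le> (\<Sum>z\<in>Zs. \<Sum>i\<in>I - z. 17/18)"
      unfolding F_def
    proof (intro sum_mono)
      fix z i assume z: "z \<in> Zs" and i: "i \<in> I - z"
      let ?y = "insert i z"
      have zI: "z \<subseteq> I" "card z = kk" using z by (auto simp: Zs_def)
      have fz: "finite z" using zI fI finite_subset by blast
      have yI: "?y \<subseteq> I" "card ?y = Suc kk" using zI i fz by auto
      have lz: "length (Xs p z) < L" using len_X[of z p] zI by (simp add: I_def L_def p_def)
      have ly: "L < length (Xs p ?y)" using len_X[of ?y p] yI by (simp add: I_def L_def p_def)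
      have az: "el_lcs_answers (Ain z) (Bin z) \<subseteq> {1}"
        unfolding Ain_def Bin_def by (rule answers_A[OF p2 pn lz])
      have ay: "el_lcs_answers (Ain ?y) (Bin ?y) \<subseteq> {enc_length (Xs p ?y)}"
        unfolding Ain_def Bin_def by (rule answers_B[OF p2 pn ly])
      have e1: "enc_length (Xs p ?y) \<noteq> 1" using X01[OF p2, of ?y] enc_length_not1 by blast
      define G where "G = {j. alg_out Q j \<in> el_lcs_answers (Ain z) (Bin z)}"
      have pa: "(\<Sum>j<D. if j \<in> G then (cmod (run_state n W Q (Ain z) (Bin z) (alg_T Q) j))\<^sup>2 else 0) \<ge> 2/3"
        using succ[of z] by (simp add: G_def success_prob_def D_def)
      have pb: "(\<Sum>j<D. if j \<notin> G then (cmod (run_state n W Q (Ain ?y) (Bin ?y) (alg_T Q) j))\<^sup>2 else 0) \<ge> 2/3"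
      proof -
        have "2/3 \<le> (\<Sum>j<D. if alg_out Q j \<in> el_lcs_answers (Ain ?y) (Bin ?y) then (cmod (run_state n W Q (Ain ?y) (Bin ?y) (alg_T Q) j))\<^sup>2 else 0)"
          using succ[of ?y] by (simp add: success_prob_def D_def)
        also have "\<dots> \<le> (\<Sum>j<D. if j \<notin> G then (cmod (run_state n W Q (Ain ?y) (Bin ?y) (alg_T Q) j))\<^sup>2 else 0)"
        proof (rule sum_mono)
          fix j
          have "alg_out Q j \<in> el_lcs_answers (Ain ?y) (Bin ?y) \<Longrightarrow> j \<notin> G"
          proof
            assume h: "alg_out Q j \<in> el_lcs_answers (Ain ?y) (Bin ?y)" and g: "j \<in> G"
            have "alg_out Q j = enc_length (Xs p ?y)" using h ay by blast
            moreover have "alg_out Q j = 1" using g az unfolding G_def by blast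
            ultimately show False using e1 by simp
          qed
          thus "(if alg_out Q j \<in> el_lcs_answers (Ain ?y) (Bin ?y) then (cmod (run_state n W Q (Ain ?y) (Bin ?y) (alg_T Q) j))\<^sup>2 else 0)
              \<le> (if j \<notin> G then (cmod (run_state n W Q (Ain ?y) (Bin ?y) (alg_T Q) j))\<^sup>2 else 0)" by auto
        qed
        finally show ?thesis .
      qed
      have n1: "nrm D (run_state n W Q (Ain w) (Bin w) (alg_T Q)) = 1" for w
        using nrm1[OF order_refl, of w] unfolding psiT .
      show "cmod (ip D (\<psi> z T) (\<psi> ?y T)) \<le> 17/18"
        unfolding psiT by (rule final_bound[OF n1 n1 pa pb])
    qed
    also have "\<dots> = (\<Sum>z\<in>Zs. real (kk + 1) * (17/18))"
    proof (rule sum.cong[OF refl])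
      fix z assume "z \<in> Zs"
      hence zI': "z \<subseteq> I" "card z = kk" by (simp_all add: Zs_def)
      have "finite z" using finite_subset[OF zI'(1) fI] .
      hence "card (I - z) = card I - card z" by (rule card_Diff_subset[OF _ zI'(1)])
      hence "card (I - z) = kk + 1" using zI' cI by (simp add: p_def)
      thus "(\<Sum>i\<in>I - z. 17/18) = real (kk + 1) * (17/18)" by simp
    qed
    also have "\<dots> = real (card Zs) * real (kk + 1) * (17/18)" by simp
    finally show ?thesis .
  qed
  have "real (card Zs) * real (kk + 1) - 2 * real T * real (card Zs) \<le> real (card Zs) * real (kk + 1) * (17/18)"
    using Fdec[OF order_refl] FT F0 by linarith
  hence "real (card Zs) * (real (kk + 1) / 36) \<le> real (card Zs) * real T"
    by (simp add: algebra_simps)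
  hence "real (kk + 1) / 36 \<le> real T" using cZpos by simp
  moreover have "real n / 144 \<le> real (kk + 1) / 36" using nk kk1 by simp
  ultimately show ?thesis by (simp add: T_def)
qed

theorem lemma8:
  shows "\<exists>c > (0::real). \<exists>k::nat. \<exists>N::nat. \<forall>n \<ge> N. \<exists>W0::nat. \<forall>W \<ge> W0. \<forall>Q.
           solves_EL_LCS_RLE n W Q \<longrightarrow> c * real n / (ln (real n)) ^ k \<le> real (alg_T Q)"
proof -
  have "\<forall>n \<ge> 6. \<exists>W0::nat. \<forall>W \<ge> W0. \<forall>Q.
           solves_EL_LCS_RLE n W Q \<longrightarrow> 1/144 * real n / (ln (real n)) ^ 0 \<le> real (alg_T Q)"
  proof (intro allI impI)
    fix n :: nat assume n6: "6 \<le> n"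
    show "\<exists>W0::nat. \<forall>W \<ge> W0. \<forall>Q.
           solves_EL_LCS_RLE n W Q \<longrightarrow> 1/144 * real n / (ln (real n)) ^ 0 \<le> real (alg_T Q)"
      using main_bound[OF n6] by (intro exI[of _ "2 * n + 6"]) auto
  qed
  thus ?thesis by (intro exI[of _ "1/144"] conjI) (simp, blast)
qed

end
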